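(* In the setting below (either $P=\mathfrak S$ or $P=\mathfrak A$, absolute error criterion), if $\{S_d\}$ is polynomially tractable with constants $C,p>0$, $q\ge0$, then $\lambda\in\ell_\tau$ for all $\tau>p/2$, and for every such $\tau$ and all $d\in\mathbb N$, $$\frac1{\lambda_{d,\psi(1)}^\tau}\sum_{k\in\nabla_d}\lambda_{d,k}^\tau\le(1+C)d^q+C^{2\tau/p}\zeta\Big(\frac{2\tau}p\Big)\Big(\frac{d^{2q/p}}{\lambda_{d,\psi(1)}}\Big)^\tau.$$
   Context: Setting: $S_1:H_1\to G_1$ is a compact linear operator between real Hilbert spaces ($H_1$ infinite-dimensional separable); $\lambda=(\lambda_m)_{m\in\mathbb N}$, $\lambda_1\ge\lambda_2\ge\dots\ge0$, are the eigenvalues of $S_1^\dagger S_1$. $S_d=S_1^{\otimes d}:H_1^{\otimes d}\to G_1^{\otimes d}$. For each $d$ fix $\emptyset\ne I_d=\{i_1<\dots<i_{a_d}\}\subset\{1,\dots,d\}$ ($I_1=\{1\}$), put $a_d=\#I_d$, $b_d=d-a_d$, and fix one type $P\in\{\mathfrak S,\mathfrak A\}$ for all $d$; the problem $\{S_d\}$ is the family of restrictions of $S_d$ to the $I_d$-symmetric subspace (if $P=\mathfrak S$) or $I_d$-antisymmetric subspace (if $P=\mathfrak A$) of $H_1^{\otimes d}$, i.e. the range of $\frac1{a_d!}\sum_{\pi}(\pm1)U_\pi$, the sum over permutations $\pi$ of $\{1,\dots,d\}$ fixing all points outside $I_d$, $U_\pi(f_1\otimes\cdots\otimes f_d)=f_{\pi(1)}\otimes\cdots\otimes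 f_{\pi(d)}$, sign $(-1)^{|\pi|}$ used for $\mathfrak A$. Let $\nabla_d=\{k\in\mathbb N^d:k_{i_1}\le\dots\le k_{i_{a_d}}\}$ for $P=\mathfrak S$ and with strict inequalities for $P=\mathfrak A$; $\lambda_{d,k}=\prod_{l=1}^d\lambda_{k_l}$; $\psi:\mathbb N\to\nabla_d$ a bijection with $\lambda_{d,\psi(1)}\ge\lambda_{d,\psi(2)}\ge\cdots$. These are exactly the eigenvalues of $S_d^\dagger S_d$ on the subspace, and the information complexity (absolute error) is $n(\epsilon,d)=\#\{k\in\nabla_d:\lambda_{d,k}>\epsilon^2\}$, the initial error $\epsilon^{\rm init}_d=\sqrt{\lambda_{d,\psi(1)}}$ (equal to $\lambda_1^{d/2}$ if $P=\mathfrak S$, and $\sqrt{\lambda_1^{b_d}\lambda_1\lambda_2\cdots\lambda_{a_d}}$ if $P=\mathfrak A$). Polynomially tractable: $\exists C,p>0,q\ge0$ with $n(\epsilon,d)\le C\epsilon^{-p}d^q$ for all $d\in\mathbb N,\epsilon\in(0,1]$; strongly polynomially tractable: this with $q=0$. Standing assumptions: $\lambda_2>0$ and $\epsilon_d^{\rm init}>0$ for all $d$. $\ell_\tau$: sequences with $\|\lambda\|_{\ell_\tau}^\tau=\sum_m\lambda_m^\tau<\infty$. $\zeta$ is the Riemann zeta function. *)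

theory Defs
  imports "HOL-Analysis.Analysis"
begin

text \<open>Eigenvalue sequences are indexed from 1: lam 1, lam 2, ...; the value lam 0 is unused.
  Multi-indices k in N^d are functions on {1..d} (extensional, undefined outside).
  The flag anti selects P = antisymmetric (True) or P = symmetric (False).\<close>

definition nabla :: "bool \<Rightarrow> (nat \<Rightarrow> nat set) \<Rightarrow> nat \<Rightarrow> (nat \<Rightarrow> nat) set" where
  "nabla anti I d = {k \<in> PiE {1..d} (\<lambda>_. {1..}).
      \<forall>i\<in>I d. \<forall>j\<in>I d. i < j \<longrightarrow> (if anti then k i < k j else k i \<le> k j)}"

definition lam_dk :: "(nat \<Rightarrow> real) \<Rightarrow> nat \<Rightarrow> (nat \<Rightarrow> nat) \<Rightarrow> real" where
  "lam_dk lam d k = (\<Prod>l\<in>{1..d}. lam (k l))"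

definition info_compl :: "(nat \<Rightarrow> real) \<Rightarrow> bool \<Rightarrow> (nat \<Rightarrow> nat set) \<Rightarrow> real \<Rightarrow> nat \<Rightarrow> nat" where
  "info_compl lam anti I \<epsilon> d = card {k \<in> nabla anti I d. lam_dk lam d k > \<epsilon>\<^sup>2}"

definition zeta_real :: "real \<Rightarrow> real" where
  "zeta_real s = (\<Sum>n. 1 / (real (Suc n)) powr s)"

end

theory Submission imports Defs begin

lemma fin_sup:
  fixes lam :: "nat \<Rightarrow> real"
  assumes lam_nonneg: "\<And>m. m \<ge> 1 \<Longrightarrow> lam m \<ge> 0"
    and lam_mono: "\<And>m n. 1 \<le> m \<Longrightarrow> m \<le> n \<Longrightarrow> lam n \<le> lam m"
    and lam_to_0: "(\<lambda>m. lam (Suc m)) \<longlonglongrightarrow> 0"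
    and l1: "lam 1 > 0" and e: "e > 0"
  shows "finite {k \<in> PiE {1..d} (\<lambda>_. {1::nat..}). lam_dk lam d k > e}"
proof -
  define t where "t = e / lam 1 ^ (d-1)"
  have t: "t > 0" using l1 e by (simp add: t_def)
  from lam_to_0 t obtain M where M: "\<And>m. m \<ge> M \<Longrightarrow> lam (Suc m) < t"
    by (metis (no_types, lifting) LIMSEQ_D diff_zero norm_minus_cancel real_norm_def abs_less_iff)
  have "{k \<in> PiE {1..d} (\<lambda>_. {1::nat..}). lam_dk lam d k > e} \<subseteq> PiE {1..d} (\<lambda>_. {1..M})"
  proof
    fix k assume k: "k \<in> {k \<in> PiE {1..d} (\<lambda>_. {1::nat..}). lam_dk lam d k > e}"
    have "k l \<le> M" if l: "l \<in> {1..d}" for l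
    proof (rule ccontr)
      assume "\<not> k l \<le> M"
      then obtain m where m: "k l = Suc m" "m \<ge> M" by (metis Suc_pred less_Suc_eq_le not_le less_nat_zero_code not_less0 gr0I)
      have kl: "lam (k l) < t" using M m by simp
      have kpos: "\<And>i. i \<in> {1..d} \<Longrightarrow> k i \<ge> 1" using k by (auto simp: PiE_def Pi_def)
      have "lam_dk lam d k = lam (k l) * (\<Prod>i\<in>{1..d}-{l}. lam (k i))"
        unfolding lam_dk_def using l by (simp add: prod.remove)
      also have "(\<Prod>i\<in>{1..d}-{l}. lam (k i)) \<le> lam 1 ^ (d-1)"
      proof -
        have "(\<Prod>i\<in>{1..d}-{l}. lam (k i)) \<le> (\<Prod>i\<in>{1..d}-{l}. lam 1)"
          apply (rule prod_mono)
          using kpos lam_nonneg lam_mono by auto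
        also have "\<dots> = lam 1 ^ (d-1)" using l by (simp add: card_Diff_singleton)
        finally show ?thesis .
      qed
      hence "lam (k l) * (\<Prod>i\<in>{1..d}-{l}. lam (k i)) \<le> lam (k l) * lam 1 ^ (d-1)"
        using kpos[OF l] lam_nonneg by (simp add: mult_left_mono)
      also have "\<dots> < t * lam 1 ^ (d-1)" using kl l1 by simp
      also have "\<dots> = e" using l1 by (simp add: t_def)
      finally show False using k by simp
    qed
    thus "k \<in> PiE {1..d} (\<lambda>_. {1..M})" using k by (auto simp: PiE_def Pi_def)
  qed
  thus ?thesis by (rule finite_subset) (simp add: finite_PiE)
qed

theorem lemma3:
  fixes lam :: "nat \<Rightarrow> real" and anti :: bool and I :: "nat \<Rightarrow> nat set"
    and psi :: "nat \<Rightarrow> nat \<Rightarrow> (nat \<Rightarrow> nat)"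
    and C p q :: real
  assumes lam_nonneg: "\<And>m. m \<ge> 1 \<Longrightarrow> lam m \<ge> 0"
    and lam_mono: "\<And>m n. 1 \<le> m \<Longrightarrow> m \<le> n \<Longrightarrow> lam n \<le> lam m"
    and lam_to_0: "(\<lambda>m. lam (Suc m)) \<longlonglongrightarrow> 0"
    and lam2: "lam 2 > 0"
    and I_sub: "\<And>d. d \<ge> 1 \<Longrightarrow> I d \<subseteq> {1..d}"
    and I_ne: "\<And>d. d \<ge> 1 \<Longrightarrow> I d \<noteq> {}"
    and I1: "I 1 = {1}"
    and psi_bij: "\<And>d. d \<ge> 1 \<Longrightarrow> bij_betw (psi d) {1..} (nabla anti I d)"
    and psi_ord: "\<And>d i j. d \<ge> 1 \<Longrightarrow> 1 \<le> i \<Longrightarrow> i \<le> j \<Longrightarrow>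
                    lam_dk lam d (psi d j) \<le> lam_dk lam d (psi d i)"
    and init_pos: "\<And>d. d \<ge> 1 \<Longrightarrow> lam_dk lam d (psi d 1) > 0"
    and C_pos: "C > 0" and p_pos: "p > 0" and q_nonneg: "q \<ge> 0"
    and poly_tract: "\<And>d \<epsilon>. d \<ge> 1 \<Longrightarrow> 0 < \<epsilon> \<Longrightarrow> \<epsilon> \<le> 1 \<Longrightarrow>
                    real (info_compl lam anti I \<epsilon> d) \<le> C * \<epsilon> powr (-p) * real d powr q"
  shows "\<forall>\<tau>. \<tau> > p / 2 \<longrightarrow>
           summable (\<lambda>m. lam (Suc m) powr \<tau>) \<and>
           (\<forall>d\<ge>1. (\<lambda>k. lam_dk lam d k powr \<tau>) summable_on nabla anti I d \<and>
              (1 / lam_dk lam d (psi d 1) powr \<tau>) * (\<Sum>\<^sub>\<infinity>k\<in>nabla anti I d. lam_dk lam d k powr \<tau>)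
              \<le> (1 + C) * real d powr q
                 + C powr (2 * \<tau> / p) * zeta_real (2 * \<tau> / p)
                   * (real d powr (2 * q / p) / lam_dk lam d (psi d 1)) powr \<tau>)"
proof (intro allI impI)
  fix \<tau> :: real assume tau: "\<tau> > p / 2"
  define s where "s = 2 * \<tau> / p"
  have s1: "s > 1" using tau p_pos by (simp add: s_def field_simps)
  have tau_pos: "\<tau> > 0" using tau p_pos by (smt (verit) half_gt_zero)
  have lam1: "lam 1 > 0" using lam2 lam_mono[of 1 2] by simp
  have zsum: "summable (\<lambda>n. 1 / real (Suc n) powr s)"
  proof -
    have "summable (\<lambda>n. real n powr (-s))" using s1 summable_real_powr_iff by simp
    hence "summable (\<lambda>n. real (Suc n) powr (-s))" by (subst summable_Suc_iff)
    thus ?thesis by (simp add: powr_minus_divide)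
  qed
  have key: "summable (\<lambda>n. lam_dk lam d (psi d (Suc n)) powr \<tau>) \<and>
     (1 / lam_dk lam d (psi d 1) powr \<tau>) * (\<Sum>n. lam_dk lam d (psi d (Suc n)) powr \<tau>)
              \<le> (1 + C) * real d powr q
                 + C powr (2 * \<tau> / p) * zeta_real (2 * \<tau> / p)
                   * (real d powr (2 * q / p) / lam_dk lam d (psi d 1)) powr \<tau>"
    if d: "d \<ge> 1" for d
  proof -
    define mu where "mu j = lam_dk lam d (psi d j)" for j
    have psi_in: "psi d j \<in> nabla anti I d" if "j \<ge> 1" for j
      using psi_bij[OF d] that by (auto simp: bij_betw_def)
    have mu_nn: "mu j \<ge> 0" if "j \<ge> 1" for j
      using psi_in[OF that] unfolding mu_def lam_dk_def nabla_def
      by (auto intro!: prod_nonneg lam_nonneg simp: PiE_def Pi_def)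
    have mu1: "mu 1 > 0" using init_pos[OF d] by (simp add: mu_def)
    have fin: "finite {k \<in> nabla anti I d. lam_dk lam d k > e}" if "e > 0" for e
    proof (rule finite_subset[OF _ fin_sup[of lam e d]])
      show "{k \<in> nabla anti I d. e < lam_dk lam d k} \<subseteq> {k \<in> PiE {1..d} (\<lambda>_. {1::nat..}). lam_dk lam d k > e}"
        by (auto simp: nabla_def)
    qed (use lam_nonneg lam_mono lam_to_0 lam1 that in auto)
    have count: "real j \<le> C * e powr (-p/2) * real d powr q"
      if j: "j \<ge> 1" and e: "0 < e" "e \<le> 1" "e < mu j" for j e
    proof -
      have sub: "psi d ` {1..j} \<subseteq> {k \<in> nabla anti I d. lam_dk lam d k > (sqrt e)\<^sup>2}"
      proof
        fix k assume "k \<in> psi d ` {1..j}"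
        then obtain i where i: "i \<in> {1..j}" "k = psi d i" by auto
        have "mu j \<le> mu i" using psi_ord[OF d, of i j] i by (simp add: mu_def)
        thus "k \<in> {k \<in> nabla anti I d. lam_dk lam d k > (sqrt e)\<^sup>2}"
          using psi_in[of i] i e by (simp add: mu_def)
      qed
      have inj: "inj_on (psi d) {1..j}" using psi_bij[OF d]
        by (auto simp: bij_betw_def intro: inj_on_subset)
      have "j = card (psi d ` {1..j})" using card_image[OF inj] by simp
      also have "\<dots> \<le> info_compl lam anti I (sqrt e) d" unfolding info_compl_def
        by (rule card_mono[OF fin sub]) (use e in simp)
      finally have "real j \<le> real (info_compl lam anti I (sqrt e) d)" by simp
      also have "\<dots> \<le> C * sqrt e powr (-p) * real d powr q"
        using poly_tract[OF d, of "sqrt e"] e by simp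
      also have "sqrt e powr (-p) = e powr (-p/2)"
        using e by (simp add: powr_half_sqrt[symmetric] powr_powr)
      finally show ?thesis .
    qed
    define D where "D = C * real d powr q"
    have Dpos: "D > 0" using C_pos d by (simp add: D_def)
    define N where "N = nat (floor D)"
    have ND: "real N \<le> D" using Dpos by (simp add: N_def)
    have DN: "D < real N + 1" using Dpos by (simp add: N_def)
    have big: "mu (Suc n) \<le> (D / real (Suc n)) powr (2/p)" if n: "n \<ge> N" for n
    proof -
      have SnD: "real (Suc n) > D" using DN n by simp
      have le1: "mu (Suc n) \<le> 1"
      proof (rule ccontr)
        assume "\<not> mu (Suc n) \<le> 1"
        hence "real (Suc n) \<le> C * 1 powr (-p/2) * real d powr q" by (intro count) auto
        thus False using SnD by (simp add: D_def)
      qed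
      define B where "B = (D / real (Suc n)) powr (2/p)"
      have Bpos: "B > 0" using Dpos by (simp add: B_def)
      have "B < 1 powr (2/p)" unfolding B_def
        by (rule powr_less_mono2) (use p_pos Dpos SnD in auto)
      hence Blt: "B < 1" by simp
      show ?thesis unfolding B_def[symmetric]
      proof (rule ccontr)
        assume nB: "\<not> mu (Suc n) \<le> B"
        define e where "e = (mu (Suc n) + B) / 2"
        have e: "0 < e" "e \<le> 1" "e < mu (Suc n)" "B < e" using nB Bpos le1 by (auto simp: e_def)
        have "real (Suc n) \<le> D * e powr (-p/2)" using count[of "Suc n" e] e by (simp add: D_def mult_ac)
        hence "real (Suc n) * e powr (p/2) \<le> D"
          using e by (simp add: powr_minus_divide field_simps)
        hence ep: "e powr (p/2) \<le> D / real (Suc n)" by (simp add: field_simps)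
        have "(e powr (p/2)) powr (2/p) \<le> B" unfolding B_def
          using p_pos ep by (intro powr_mono2) auto
        hence "e \<le> B" using p_pos e by (simp add: powr_powr powr_one)
        thus False using e by simp
      qed
    qed
    define c where "c = D powr s / mu 1 powr \<tau>"
    have c_nn: "c \<ge> 0" by (simp add: c_def)
    define g where "g n = mu (Suc n) powr \<tau> / mu 1 powr \<tau>" for n
    define h where "h n = (if n < N then 1 else 0) + c * (1 / real (Suc n) powr s)" for n
    have g_nn: "g n \<ge> 0" for n by (simp add: g_def)
    have gh: "g n \<le> h n" for n
    proof (cases "n < N")
      case True
      have "mu (Suc n) \<le> mu 1" using psi_ord[OF d, of 1 "Suc n"] by (simp add: mu_def)
      hence "mu (Suc n) powr \<tau> \<le> mu 1 powr \<tau>" using mu_nn[of "Suc n"] tau_pos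
        by (intro powr_mono2) auto
      hence "g n \<le> 1" using mu1 by (simp add: g_def)
      moreover have "c * (1 / real (Suc n) powr s) \<ge> 0" using c_nn by simp
      ultimately show ?thesis using True unfolding h_def by simp
    next
      case False
      have "mu (Suc n) powr \<tau> \<le> ((D / real (Suc n)) powr (2/p)) powr \<tau>"
        using big[of n] False mu_nn[of "Suc n"] tau_pos by (intro powr_mono2) auto
      also have "\<dots> = D powr s / real (Suc n) powr s"
        by (simp add: powr_powr powr_divide s_def)
      finally have gg: "mu (Suc n) powr \<tau> \<le> D powr s / real (Suc n) powr s" .
      have "g n \<le> (D powr s / real (Suc n) powr s) / mu 1 powr \<tau>"
        unfolding g_def using mu1 gg by (intro divide_right_mono) auto
      also have "\<dots> = c * (1 / real (Suc n) powr s)" by (simp add: c_def)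
      finally have "g n \<le> c * (1 / real (Suc n) powr s)" .
      thus ?thesis using False by (simp add: h_def)
    qed
    have hsum: "h sums (real N + c * zeta_real s)"
    proof -
      have "(\<lambda>n. if n < N then 1 else 0 :: real) sums (\<Sum>n\<in>{..<N}. if n < N then 1 else 0)"
        by (rule sums_finite) auto
      hence 1: "(\<lambda>n. if n < N then 1 else 0 :: real) sums real N" by simp
      have 2: "(\<lambda>n. c * (1 / real (Suc n) powr s)) sums (c * zeta_real s)"
        unfolding zeta_real_def by (intro sums_mult summable_sums zsum)
      show ?thesis unfolding h_def using sums_add[OF 1 2] by simp
    qed
    have gs: "summable g"
      by (rule summable_comparison_test'[OF sums_summable[OF hsum], of 0]) (use g_nn gh in auto)
    have "suminf g \<le> suminf h" by (rule suminf_le[OF gh gs sums_summable[OF hsum]])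
    also have "\<dots> = real N + c * zeta_real s" using hsum by (simp add: sums_iff)
    finally have sg: "suminf g \<le> real N + c * zeta_real s" .
    have Geq: "(\<lambda>n. lam_dk lam d (psi d (Suc n)) powr \<tau>) = (\<lambda>n. g n * mu 1 powr \<tau>)"
      using mu1 by (auto simp: g_def mu_def)
    have Gs: "summable (\<lambda>n. lam_dk lam d (psi d (Suc n)) powr \<tau>)"
      unfolding Geq by (rule summable_mult2[OF gs])
    have "(1 / lam_dk lam d (psi d 1) powr \<tau>) * (\<Sum>n. lam_dk lam d (psi d (Suc n)) powr \<tau>)
        = suminf g"
      unfolding Geq using mu1 by (simp add: suminf_mult2[OF gs, symmetric] mu_def)
    also have "\<dots> \<le> real N + c * zeta_real s" by (rule sg)
    also have "\<dots> \<le> (1 + C) * real d powr q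
                 + C powr (2 * \<tau> / p) * zeta_real (2 * \<tau> / p)
                   * (real d powr (2 * q / p) / lam_dk lam d (psi d 1)) powr \<tau>"
    proof -
      have "real N \<le> (1 + C) * real d powr q" unfolding distrib_right using ND[unfolded D_def] powr_ge_zero[of "real d" q] by linarith
      moreover have "c = C powr (2 * \<tau> / p) * (real d powr (2 * q / p) / lam_dk lam d (psi d 1)) powr \<tau>"
        using C_pos by (simp add: c_def D_def s_def powr_mult powr_powr powr_divide mu_def mult_ac)
      ultimately show ?thesis by (simp add: s_def)
    qed
    finally show ?thesis using Gs by simp
  qed
  have bSuc: "bij_betw Suc UNIV {1::nat..}"
    by (simp add: image_iff set_eq_iff) (metis Suc_pred' neq0_conv not_less_eq_eq le0 Suc_le_eq)
  have infs: "(\<lambda>k. lam_dk lam d k powr \<tau>) summable_on nabla anti I d \<and>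
      (\<Sum>\<^sub>\<infinity>k\<in>nabla anti I d. lam_dk lam d k powr \<tau>) = (\<Sum>n. lam_dk lam d (psi d (Suc n)) powr \<tau>)"
    if d: "d \<ge> 1" for d
  proof -
    have bij: "bij_betw (\<lambda>n. psi d (Suc n)) UNIV (nabla anti I d)"
      using bij_betw_trans[OF bSuc psi_bij[OF d]] by (simp add: o_def)
    have hs: "((\<lambda>n. lam_dk lam d (psi d (Suc n)) powr \<tau>) has_sum (\<Sum>n. lam_dk lam d (psi d (Suc n)) powr \<tau>)) UNIV"
      by (intro sums_nonneg_imp_has_sum summable_sums) (use key[OF d] in auto)
    show ?thesis
      using summable_on_reindex_bij_betw[OF bij, of "\<lambda>k. lam_dk lam d k powr \<tau>"]
        infsum_reindex_bij_betw[OF bij, of "\<lambda>k. lam_dk lam d k powr \<tau>"] hs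
      by (auto simp: summable_on_def infsumI)
  qed
  have lsum: "summable (\<lambda>m. lam (Suc m) powr \<tau>)"
  proof -
    have b1: "bij_betw (\<lambda>k. k 1) (nabla anti I 1) {1::nat..}"
    proof (rule bij_betw_byWitness[where f' = "\<lambda>m i. if i = 1 then m else undefined"])
      show "\<forall>k\<in>nabla anti I 1. (\<lambda>i. if i = 1 then k 1 else undefined) = k"
        by (auto simp: nabla_def PiE_def extensional_def fun_eq_iff)
      show "\<forall>m\<in>{1..}. (if (1::nat) = 1 then m else undefined) = m" by simp
      show "(\<lambda>k. k 1) ` nabla anti I 1 \<subseteq> {1..}" by (auto simp: nabla_def PiE_def Pi_def)
      show "(\<lambda>m i. if i = 1 then m else undefined) ` {1..} \<subseteq> nabla anti I 1"
      proof -
        have I1': "I (Suc 0) = {Suc 0}" using I1 by simp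
        show ?thesis by (auto simp: nabla_def PiE_def Pi_def I1' extensional_def)
      qed
    qed
    have "(\<lambda>k. lam_dk lam 1 k powr \<tau>) summable_on nabla anti I 1" using infs[of 1] by simp
    hence "(\<lambda>k. lam (k 1) powr \<tau>) summable_on nabla anti I 1" by (simp add: lam_dk_def)
    hence "(\<lambda>m. lam m powr \<tau>) summable_on {1..}"
      using summable_on_reindex_bij_betw[OF b1, of "\<lambda>m. lam m powr \<tau>"] by simp
    hence "(\<lambda>n. lam (Suc n) powr \<tau>) summable_on UNIV"
      using summable_on_reindex_bij_betw[OF bSuc, of "\<lambda>m. lam m powr \<tau>"] by simp
    thus ?thesis by (rule summable_on_imp_summable)
  qed
  show "summable (\<lambda>m. lam (Suc m) powr \<tau>) \<and>
           (\<forall>d\<ge>1. (\<lambda>k. lam_dk lam d k powr \<tau>) summable_on nabla anti I d \<and>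
              (1 / lam_dk lam d (psi d 1) powr \<tau>) * (\<Sum>\<^sub>\<infinity>k\<in>nabla anti I d. lam_dk lam d k powr \<tau>)
              \<le> (1 + C) * real d powr q
                 + C powr (2 * \<tau> / p) * zeta_real (2 * \<tau> / p)
                   * (real d powr (2 * q / p) / lam_dk lam d (psi d 1)) powr \<tau>)"
    using lsum key infs by auto
qed

end
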